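(* Let $p,q\in\mathbb C$ with $p\neq0$, and for $\ell\in\frac12\mathbb N_0$ and $m\in\{-\ell,-\ell+1,\dots,\ell\}$ let $\Delta(\ell)_m:=-m^2+|q|^2-|p|^2-2im\,\mathrm{Re}(q)$, and $\langle\ell\rangle:=\sqrt{1+\ell(\ell+1)}$. Then $\Delta(\ell)_m\neq0$ for all $\ell\in\frac12\mathbb N_0$ and all $m\in\{-\ell,\dots,\ell\}$ if and only if one of the following holds: 1. $|p|>|q|$; 2. $|p|<|q|$ and $\mathrm{Re}(q)\neq0$; 3. there exists $M>0$ such that for all $\ell\in\frac12\mathbb N_0$ with $\langle\ell\rangle\ge M$ one has $\big|m^2-(|q|^2-|p|^2)\big|\ge\langle\ell\rangle^{-M}$ for all $m\in\{-\ell,\dots,\ell\}$.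
   Context: Here $m$ ranges over $-\ell\le m\le\ell$ with $\ell-m\in\mathbb N_0$; these quantities arise for the operator $Pu=\partial_0u-qu-p\bar u$ on $\mathrm{SU}(2)$, with $\langle\ell\rangle$ the eigenvalue of $(I-\mathcal L)^{1/2}$ on the matrix entries of the representation $\mathsf t^\ell$. *)

theory Defs
  imports Complex_Main
begin

text \<open>Half-integers l in (1/2) N_0 are encoded by n :: nat via l = n / 2.\<close>
definition half_level :: "nat \<Rightarrow> real" where
  "half_level n = real n / 2"

definition m_range :: "nat \<Rightarrow> real set" where
  "m_range n = {real k - half_level n | k. k \<le> n}"

text \<open>Delta(l)_m = -m^2 + |q|^2 - |p|^2 - 2 i m Re(q) (independent of l).\<close>
definition Delta :: "complex \<Rightarrow> complex \<Rightarrow> real \<Rightarrow> complex" where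
  "Delta p q m = - complex_of_real (m^2) + complex_of_real ((cmod q)^2 - (cmod p)^2)
                 - 2 * \<i> * complex_of_real m * complex_of_real (Re q)"

definition jbracket :: "nat \<Rightarrow> real" where
  "jbracket n = sqrt (1 + half_level n * (half_level n + 1))"

end

theory Submission
  imports Defs
begin

lemma Delta_zero_iff:
  "Delta p q m = 0 \<longleftrightarrow> m^2 = (cmod q)^2 - (cmod p)^2 \<and> m * Re q = 0"
  unfolding Delta_def by (auto simp: complex_eq_iff)

lemma m_range_iff: "m \<in> m_range n \<longleftrightarrow> (\<exists>k. k \<le> n \<and> m = real k - real n / 2)"
  unfolding m_range_def half_level_def by auto

lemma jbracket_ge: "jbracket n \<ge> real n / 2"
proof -
  have "(real n / 2)^2 \<le> 1 + real n / 2 * (real n / 2 + 1)"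
    by (simp add: power2_eq_square algebra_simps)
  then have "sqrt ((real n / 2)^2) \<le> jbracket n"
    unfolding jbracket_def half_level_def by (rule real_sqrt_le_mono)
  then show ?thesis by simp
qed

lemma jbracket_pos: "jbracket n > 0"
  unfolding jbracket_def half_level_def by (simp add: add_pos_nonneg)

lemma half_in_range: "real j / 2 \<in> m_range j"
  unfolding m_range_iff by (rule exI[of _ j]) auto

lemma shift_range:
  assumes "m \<in> m_range n" shows "m \<in> m_range (n + 2 * t)"
proof -
  from assms obtain k where "k \<le> n" "m = real k - real n / 2" by (auto simp: m_range_iff)
  then show ?thesis unfolding m_range_iff
    by (intro exI[of _ "k + t"]) (auto simp: field_simps)
qed

lemma range_abs:
  assumes "m \<in> m_range n" shows "\<exists>j::nat. \<bar>m\<bar> = real j / 2"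
proof -
  from assms obtain k where k: "k \<le> n" "m = real k - real n / 2" by (auto simp: m_range_iff)
  show ?thesis
  proof (cases "2 * k \<ge> n")
    case True
    then show ?thesis using k by (intro exI[of _ "2*k - n"]) (auto simp: of_nat_diff)
  next
    case False
    then show ?thesis using k by (intro exI[of _ "n - 2*k"]) (auto simp: of_nat_diff)
  qed
qed

theorem proposition5p2:
  fixes p q :: complex
  assumes "p \<noteq> 0"
  shows "(\<forall>n::nat. \<forall>m\<in>m_range n. Delta p q m \<noteq> 0) \<longleftrightarrow>
         (cmod p > cmod q
          \<or> (cmod p < cmod q \<and> Re q \<noteq> 0)
          \<or> (\<exists>M>0. \<forall>n::nat. jbracket n \<ge> M \<longrightarrow>
                (\<forall>m\<in>m_range n. \<bar>m^2 - ((cmod q)^2 - (cmod p)^2)\<bar> \<ge> jbracket n powr (-M))))"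
    (is "?L \<longleftrightarrow> ?R")
proof
  define c where "c = (cmod q)^2 - (cmod p)^2"
  assume L: ?L
  show ?R
  proof (cases "cmod p > cmod q \<or> (cmod p < cmod q \<and> Re q \<noteq> 0)")
    case True then show ?thesis by blast
  next
    case False
    have "cmod p \<noteq> cmod q"
    proof
      assume "cmod p = cmod q"
      then have "Delta p q 0 = 0" by (simp add: Delta_zero_iff)
      moreover have "(0::real) \<in> m_range 0" using half_in_range[of 0] by simp
      ultimately show False using L by blast
    qed
    with False have Rq: "Re q = 0" and lt: "cmod p < cmod q" by auto
    have c0: "c > 0" unfolding c_def using lt
      by (simp add: power_strict_mono)
    have noroot: "(real j / 2)^2 \<noteq> c" for j :: nat
      using L half_in_range[of j] by (auto simp: Delta_zero_iff Rq c_def)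
    define N where "N = nat (ceiling (2 * sqrt c + 2))"
    define \<delta> where "\<delta> = min 1 (Min ((\<lambda>j::nat. \<bar>(real j / 2)^2 - c\<bar>) ` {..N}))"
    have dpos: "\<delta> > 0"
    proof -
      have "0 < Min ((\<lambda>j::nat. \<bar>(real j / 2)^2 - c\<bar>) ` {..N})"
        using noroot by (subst Min_gr_iff) auto
      then show ?thesis unfolding \<delta>_def by simp
    qed
    have bound: "\<bar>m^2 - c\<bar> \<ge> \<delta>" if mr: "m \<in> m_range n" for m n
    proof -
      obtain j :: nat where j: "\<bar>m\<bar> = real j / 2" using range_abs[OF mr] by blast
      have m2: "m^2 = (real j / 2)^2" using j by (metis power2_abs)
      show ?thesis
      proof (cases "j \<le> N")
        case True
        then have "Min ((\<lambda>j::nat. \<bar>(real j / 2)^2 - c\<bar>) ` {..N}) \<le> \<bar>(real j / 2)^2 - c\<bar>"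
          by (intro Min_le) auto
        then show ?thesis unfolding \<delta>_def m2 by linarith
      next
        case False
        then have "real j \<ge> 2 * sqrt c + 2" unfolding N_def by linarith
        then have "real j / 2 \<ge> sqrt c + 1" by simp
        moreover have "sqrt c \<ge> 0" using c0 by simp
        ultimately have "(real j / 2)^2 \<ge> (sqrt c + 1)^2"
          by (intro power_mono) auto
        moreover have "(sqrt c + 1)^2 = c + 2 * sqrt c + 1" using c0
          by (simp add: power2_eq_square algebra_simps)
        ultimately have "(real j / 2)^2 - c \<ge> 1" using \<open>sqrt c \<ge> 0\<close> by linarith
        then show ?thesis unfolding \<delta>_def m2 by linarith
      qed
    qed
    define M where "M = max 1 (1 / \<delta>)"
    have "\<forall>n::nat. jbracket n \<ge> M \<longrightarrow>
                (\<forall>m\<in>m_range n. \<bar>m^2 - c\<bar> \<ge> jbracket n powr (-M))"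
    proof (intro allI impI ballI)
      fix n m assume nM: "jbracket n \<ge> M" and m: "m \<in> m_range n"
      have x1: "jbracket n \<ge> 1" using nM unfolding M_def by linarith
      have "jbracket n powr (-M) \<le> jbracket n powr (-1)"
        using x1 by (intro powr_mono) (auto simp: M_def)
      also have "\<dots> = 1 / jbracket n" using x1 by (simp add: powr_minus divide_inverse)
      also have "\<dots> \<le> 1 / M" using nM by (intro divide_left_mono) (auto simp: M_def)
      also have "\<dots> \<le> \<delta>" 
      proof -
        have "1 / \<delta> \<le> M" unfolding M_def by simp
        then have "1 / M \<le> 1 / (1 / \<delta>)" using dpos by (intro divide_left_mono) (auto simp: M_def)
        then show ?thesis by simp
      qed
      also have "\<dots> \<le> \<bar>m^2 - c\<bar>" using bound[OF m] .
      finally show "\<bar>m^2 - c\<bar> \<ge> jbracket n powr (-M)" .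
    qed
    moreover have "M > 0" unfolding M_def by simp
    ultimately show ?thesis unfolding c_def by blast
  qed
next
  assume R: ?R
  show ?L
  proof (intro allI ballI notI)
    fix n m assume m: "m \<in> m_range n" and D: "Delta p q m = 0"
    then have m2: "m^2 = (cmod q)^2 - (cmod p)^2" and mr: "m * Re q = 0"
      by (auto simp: Delta_zero_iff)
    consider "cmod p > cmod q" | "cmod p < cmod q \<and> Re q \<noteq> 0"
      | "\<exists>M>0. \<forall>n::nat. jbracket n \<ge> M \<longrightarrow>
                (\<forall>m\<in>m_range n. \<bar>m^2 - ((cmod q)^2 - (cmod p)^2)\<bar> \<ge> jbracket n powr (-M))"
      using R by blast
    then show False
    proof cases
      case 1
      then have "(cmod q)^2 < (cmod p)^2" by (simp add: power_strict_mono)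
      then show False using m2 by (metis diff_less_0_iff_less not_less zero_le_power2)
    next
      case 2
      then have "(cmod p)^2 < (cmod q)^2" by (simp add: power_strict_mono)
      then have "m \<noteq> 0" using m2 by auto
      then show False using mr 2 by simp
    next
      case 3
      then obtain M where M: "M > 0" and H: "\<forall>n::nat. jbracket n \<ge> M \<longrightarrow>
                (\<forall>m\<in>m_range n. \<bar>m^2 - ((cmod q)^2 - (cmod p)^2)\<bar> \<ge> jbracket n powr (-M))"
        by blast
      define t where "t = nat (ceiling M)"
      define n' where "n' = n + 2 * t"
      have "jbracket n' \<ge> real n' / 2" by (rule jbracket_ge)
      moreover have "real n' / 2 \<ge> M"
      proof -
        have "real t \<ge> M" unfolding t_def by linarith
        then show ?thesis unfolding n'_def by simp
      qed
      ultimately have "jbracket n' \<ge> M" by linarith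
      moreover have "m \<in> m_range n'" unfolding n'_def by (rule shift_range[OF m])
      ultimately have "\<bar>m^2 - ((cmod q)^2 - (cmod p)^2)\<bar> \<ge> jbracket n' powr (-M)"
        using H by blast
      moreover have "jbracket n' powr (-M) > 0" using jbracket_pos[of n'] by simp
      ultimately show False using m2 by simp
    qed
  qed
qed

end
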